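(* Let $R$ be a $d\times d$ expansive integer matrix, $B\subset\mathbb{Z}^d$ finite with $0\in B$, $N:=|B|$, $L\subset\mathbb{Z}^d$ finite with $0\in L$, and $(\alpha_l)_{l\in L}$ complex numbers. The following are equivalent: (i) the matrix $T=\frac{1}{\sqrt N}\left(e^{2\pi i (R^T)^{-1}l\cdot b}\alpha_l\right)_{l\in L,b\in B}$ has orthonormal columns; (ii) for every $t\in\mathbb{R}^d$, $\sum_{l\in L}|\alpha_l|^2\left|m_B((R^T)^{-1}(t-l))\right|^2=1$; (iii) the functions $\{\alpha_le_l: l\in L\}$ form a Parseval frame for $L^2(\delta_{R^{-1}B})$, where $\delta_{R^{-1}B}=\frac1N\sum_{b\in B}\delta_{R^{-1}b}$.
   Context: $e_\lambda(x)=e^{2\pi i\lambda\cdot x}$, $m_B(x)=\frac1N\sum_{b\in B}e^{2\pi ib\cdot x}$, $\delta_a$ is the Dirac measure at $a$. A family $\{f_i\}$ in a Hilbert space $H$ is a Parseval frame if $\sum_i|\langle v,f_i\rangle|^2=\|v\|^2$ for all $v\in H$. A matrix is expansive if all eigenvalues have modulus $>1$. *)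

theory Defs
  imports "HOL-Analysis.Analysis"
begin

definition int_matrix :: "real^'n^'n \<Rightarrow> bool" where
  "int_matrix R \<longleftrightarrow> (\<forall>i j. R $ i $ j \<in> \<int>)"

definition int_vec :: "real^'n \<Rightarrow> bool" where
  "int_vec v \<longleftrightarrow> (\<forall>i. v $ i \<in> \<int>)"

definition expansive :: "real^'n^'n \<Rightarrow> bool" where
  "expansive R \<longleftrightarrow>
     (\<forall>z::complex. det ((mat z - (\<chi> i j. complex_of_real (R $ i $ j))) :: complex^'n^'n) = 0
        \<longrightarrow> 1 < cmod z)"

definition e_fun :: "real^'n \<Rightarrow> real^'n \<Rightarrow> complex" where
  "e_fun lam x = exp (2 * of_real pi * \<i> * of_real (lam \<bullet> x))"

definition m_B :: "(real^'n) set \<Rightarrow> real^'n \<Rightarrow> complex" where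
  "m_B B x = (1 / of_nat (card B)) * (\<Sum>b\<in>B. e_fun b x)"

definition T_entry :: "real^'n^'n \<Rightarrow> (real^'n) set \<Rightarrow> (real^'n \<Rightarrow> complex)
    \<Rightarrow> real^'n \<Rightarrow> real^'n \<Rightarrow> complex" where
  "T_entry R B \<alpha> l b = (1 / of_real (sqrt (real (card B))))
      * e_fun (matrix_inv (transpose R) *v l) b * \<alpha> l"

definition orthonormal_columns :: "('r \<Rightarrow> 'c \<Rightarrow> complex) \<Rightarrow> 'r set \<Rightarrow> 'c set \<Rightarrow> bool" where
  "orthonormal_columns M Rows Cols \<longleftrightarrow>
     (\<forall>b\<in>Cols. \<forall>b'\<in>Cols. (\<Sum>l\<in>Rows. M l b * cnj (M l b')) = (if b = b' then 1 else 0))"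

definition parseval_frame :: "('v \<Rightarrow> 'v \<Rightarrow> complex) \<Rightarrow> 'v set \<Rightarrow> ('i \<Rightarrow> 'v) \<Rightarrow> 'i set \<Rightarrow> bool" where
  "parseval_frame ip H f I \<longleftrightarrow>
     (\<forall>v\<in>H. ((\<lambda>i. (cmod (ip v (f i)))\<^sup>2) has_sum Re (ip v v)) I)"

text \<open>Elements of L^2 are represented by arbitrary functions real^n => complex (all are square
  integrable since the measure is finite and finitely supported).\<close>
definition l2_delta_inner :: "real^'n^'n \<Rightarrow> (real^'n) set \<Rightarrow> (real^'n \<Rightarrow> complex)
    \<Rightarrow> (real^'n \<Rightarrow> complex) \<Rightarrow> complex" where
  "l2_delta_inner R B f g = (1 / of_nat (card B))
      * (\<Sum>b\<in>B. f (matrix_inv R *v b) * cnj (g (matrix_inv R *v b)))"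

end

theory Submission
  imports Defs
begin

lemma e_add1: "e_fun (a + b) x = e_fun a x * e_fun b x"
  unfolding e_fun_def by (simp add: inner_add_left distrib_left distrib_right exp_add)
lemma e_add2: "e_fun a (x + y) = e_fun a x * e_fun a y"
  unfolding e_fun_def by (simp add: inner_add_right distrib_left distrib_right exp_add)
lemma e_zero1[simp]: "e_fun 0 x = 1" unfolding e_fun_def by simp
lemma e_zero2[simp]: "e_fun a 0 = 1" unfolding e_fun_def by simp
lemma e_cnj: "cnj (e_fun a x) = e_fun (- a) x"
  unfolding e_fun_def by (simp add: exp_cnj)
lemma e_comm: "e_fun a x = e_fun x a" unfolding e_fun_def by (simp add: inner_commute)
lemma e_norm[simp]: "cmod (e_fun a x) = 1"
  unfolding e_fun_def by (simp add: norm_exp_eq_Re)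
lemma e_nz[simp]: "e_fun a x \<noteq> 0" unfolding e_fun_def by simp
lemma e_mult_cnj[simp]: "e_fun a x * cnj (e_fun a x) = 1"
  by (metis complex_norm_square e_norm of_real_1 power_one)
lemma e_quarter: "e_fun a x = \<i>" if "a \<bullet> x = 1/4"
proof -
  have "2 * complex_of_real pi * \<i> * complex_of_real (a \<bullet> x) = \<i> * complex_of_real (pi/2)"
    unfolding that by (simp add: field_simps)
  moreover have "exp (\<i> * complex_of_real (pi/2)) = \<i>"
    by (metis cis_conv_exp cis_pi_half)
  ultimately show ?thesis unfolding e_fun_def by metis
qed

lemma exp_indep:
  fixes W :: "(real^'n) set"
  assumes "finite W"
  shows "\<And>A. (\<forall>s. (\<Sum>w\<in>W. A w * e_fun w s) = 0) \<Longrightarrow> \<forall>w\<in>W. A w = 0"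
  using assms
proof (induction W rule: finite_induct)
  case empty then show ?case by simp
next
  case (insert w0 W A)
  have H: "\<And>s. A w0 * e_fun w0 s + (\<Sum>w\<in>W. A w * e_fun w s) = 0"
    using insert.prems insert.hyps by (simp add: sum.insert)
  have W0: "\<forall>w\<in>W. A w * (e_fun w h - e_fun w0 h) = 0" for h
  proof -
    have "\<forall>s. (\<Sum>w\<in>W. (A w * (e_fun w h - e_fun w0 h)) * e_fun w s) = 0"
    proof
      fix s
      have 1: "A w0 * e_fun w0 s * e_fun w0 h + (\<Sum>w\<in>W. A w * e_fun w s * e_fun w h) = 0"
        using H[of "s + h"] by (simp add: e_add2 mult.assoc)
      have 2: "A w0 * e_fun w0 s * e_fun w0 h + (\<Sum>w\<in>W. A w * e_fun w s * e_fun w0 h) = 0"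
        using arg_cong[OF H[of s], of "\<lambda>z. z * e_fun w0 h"]
        by (simp add: distrib_right sum_distrib_right)
      have "(\<Sum>w\<in>W. (A w * (e_fun w h - e_fun w0 h)) * e_fun w s)
          = (\<Sum>w\<in>W. A w * e_fun w s * e_fun w h) - (\<Sum>w\<in>W. A w * e_fun w s * e_fun w0 h)"
        unfolding sum_subtractf[symmetric] by (rule sum.cong) (auto simp: algebra_simps)
      also have "\<dots> = (A w0 * e_fun w0 s * e_fun w0 h + (\<Sum>w\<in>W. A w * e_fun w s * e_fun w h))
          - (A w0 * e_fun w0 s * e_fun w0 h + (\<Sum>w\<in>W. A w * e_fun w s * e_fun w0 h))"
        by (rule add_diff_cancel_left[symmetric])
      also have "\<dots> = 0" unfolding 1 2 by simp
      finally show "(\<Sum>w\<in>W. (A w * (e_fun w h - e_fun w0 h)) * e_fun w s) = 0" .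
    qed
    then show ?thesis by (rule insert.IH)
  qed
  have AW: "\<forall>w\<in>W. A w = 0"
  proof
    fix w assume w: "w \<in> W"
    then have ne: "w - w0 \<noteq> 0" using insert.hyps by auto
    define h where "h = (1 / (4 * (norm (w - w0))^2)) *\<^sub>R (w - w0)"
    have "(w - w0) \<bullet> h = 1/4"
      using ne by (simp add: h_def power2_norm_eq_inner)
    then have "e_fun (w - w0) h = \<i>" by (rule e_quarter)
    then have "e_fun w h = \<i> * e_fun w0 h"
      using e_add1[of "w - w0" w0 h] by simp
    then have "e_fun w h - e_fun w0 h \<noteq> 0"
    proof -
      assume E: "e_fun w h = \<i> * e_fun w0 h"
      show ?thesis
      proof
        assume "e_fun w h - e_fun w0 h = 0"
        then have "\<i> * e_fun w0 h = 1 * e_fun w0 h" using E by simp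
        then have "\<i> = 1" using e_nz mult_cancel_right by blast
        then show False by simp
      qed
    qed
    then show "A w = 0" using W0[of h] w by auto
  qed
  have "A w0 * e_fun w0 0 = 0" using H[of 0] AW by simp
  then show ?case using AW by simp
qed
lemma ifz1: "(if P then (a::complex) else 0) * c = (if P then a * c else 0)" by simp
lemma ifz2: "c * (if P then (a::complex) else 0) = (if P then c * a else 0)" by simp
lemma ifz3: "cnj (if P then (a::complex) else 0) = (if P then cnj a else 0)" by simp

lemma quad2:
  fixes H :: "'a \<Rightarrow> 'a \<Rightarrow> complex"
  assumes "finite B" "b \<in> B" "b' \<in> B" "b \<noteq> b'"
  shows "(\<Sum>x\<in>B. \<Sum>y\<in>B. ((if x = b then p else 0) + (if x = b' then q else 0))
            * cnj ((if y = b then p else 0) + (if y = b' then q else 0)) * H x y)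
       = p * cnj p * H b b + p * cnj q * H b b' + q * cnj p * H b' b + q * cnj q * H b' b'"
  using assms by (simp add: distrib_left distrib_right sum.distrib ifz1 ifz2 ifz3 sum.delta sum.delta' cong: if_cong)

lemma quad1:
  fixes H :: "'a \<Rightarrow> 'a \<Rightarrow> complex"
  assumes "finite B" "b \<in> B"
  shows "(\<Sum>x\<in>B. \<Sum>y\<in>B. (if x = b then 1 else 0) * cnj (if y = b then 1 else 0) * H x y) = H b b"
  using assms by (simp add: ifz1 ifz2 ifz3 sum.delta sum.delta' cong: if_cong)

lemma quad:
  fixes H :: "'a \<Rightarrow> 'a \<Rightarrow> complex"
  assumes "finite B" and Z: "\<And>w. (\<Sum>x\<in>B. \<Sum>y\<in>B. w x * cnj (w y) * H x y) = 0"
  shows "\<forall>b\<in>B. \<forall>b'\<in>B. H b b' = 0"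
proof (intro ballI)
  fix b b' assume b: "b \<in> B" and b': "b' \<in> B"
  have d: "H x x = 0" if "x \<in> B" for x
    using Z[of "\<lambda>z. if z = x then 1 else 0"] quad1[OF assms(1) that, of H] by simp
  show "H b b' = 0"
  proof (cases "b = b'")
    case True then show ?thesis using d b by simp
  next
    case False
    have 1: "H b b' + H b' b = 0"
      using Z[of "\<lambda>z. (if z = b then 1 else 0) + (if z = b' then 1 else 0)"]
        quad2[OF assms(1) b b' False, of 1 1 H] d b b' by simp
    have 2: "- \<i> * H b b' + \<i> * H b' b = 0"
      using Z[of "\<lambda>z. (if z = b then 1 else 0) + (if z = b' then \<i> else 0)"]
        quad2[OF assms(1) b b' False, of 1 "\<i>" H] d b b' by simp
    have 3: "H b' b = - H b b'" using 1 by (simp add: eq_neg_iff_add_eq_0 add.commute)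
    have "(2 * \<i>) * H b b' = 0" using 2 unfolding 3 by (simp add: algebra_simps)
    then show ?thesis by simp
  qed
qed

lemma detc: fixes R :: "real^'n^'n"
  shows "det ((mat 0 - (\<chi> i j. complex_of_real (R $ i $ j))) :: complex^'n^'n) = (-1)^CARD('n) * of_real (det R)"
  unfolding det_def
  apply (simp add: sum_distrib_left mat_def)
  apply (rule sum.cong, simp)
  apply (simp add: prod_uminus)
  done

lemma expansive_invertible:
  fixes R :: "real^'n^'n"
  assumes "expansive R" shows "invertible R"
proof -
  have "det ((mat 0 - (\<chi> i j. complex_of_real (R $ i $ j))) :: complex^'n^'n) \<noteq> 0"
    using assms unfolding expansive_def by (metis norm_zero not_one_less_zero)
  then have "det R \<noteq> 0" unfolding detc by auto
  then show ?thesis by (simp add: invertible_det_nz)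
qed

lemma inv_facts:
  fixes R :: "real^'n^'n"
  assumes "invertible R"
  shows "R ** matrix_inv R = mat 1" "matrix_inv R ** R = mat 1"
proof -
  have "\<exists>A'. R ** A' = mat 1 \<and> A' ** R = mat 1" using assms unfolding invertible_def by blast
  from someI_ex[OF this] show "R ** matrix_inv R = mat 1" "matrix_inv R ** R = mat 1"
    unfolding matrix_inv_def by auto
qed

lemma key_dot:
  fixes R :: "real^'n^'n"
  assumes "invertible R"
  shows "(matrix_inv (transpose R) *v x) \<bullet> y = x \<bullet> (matrix_inv R *v y)"
proof -
  have "invertible (transpose R)"
    using assms unfolding invertible_def by (metis matrix_transpose_mul transpose_mat)
  from inv_facts[OF this] have "transpose R ** matrix_inv (transpose R) = mat 1" by simp
  then have a: "transpose (matrix_inv (transpose R)) ** R = mat 1"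
    by (metis matrix_transpose_mul transpose_mat transpose_transpose)
  have "transpose (matrix_inv (transpose R)) = transpose (matrix_inv (transpose R)) ** (R ** matrix_inv R)"
    using inv_facts(1)[OF assms] by simp
  also have "\<dots> = matrix_inv R" by (simp add: matrix_mul_assoc a)
  finally have t: "transpose (matrix_inv (transpose R)) = matrix_inv R" .
  have "matrix_inv (transpose R) *v x = x v* matrix_inv R"
    by (metis t vector_transpose_matrix)
  then show ?thesis by (simp add: dot_lmul_matrix)
qed


lemma e_prod: "e_fun l x * cnj (e_fun l y) = e_fun l (x - y)"
  by (simp add: e_cnj e_comm[of l] e_add1[symmetric])
lemma e_prod1: "e_fun a x * cnj (e_fun b x) = e_fun (a - b) x"
  by (simp add: e_cnj e_add1[symmetric])
lemma e_cnj2: "cnj (e_fun l y) = e_fun l (- y)"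
  by (simp add: e_cnj e_comm[of l] e_comm[of "-l"])
lemma e_S:
  fixes R :: "real^'n^'n"
  assumes "invertible R"
  shows "e_fun (matrix_inv (transpose R) *v x) y = e_fun x (matrix_inv R *v y)"
  unfolding e_fun_def key_dot[OF assms] ..
lemma e_S2:
  fixes R :: "real^'n^'n"
  assumes "invertible R"
  shows "e_fun b (matrix_inv (transpose R) *v x) = e_fun (matrix_inv R *v b) x"
  by (metis e_comm e_S[OF assms])

lemma sqrt_sq_c: "(complex_of_real (sqrt (real N)))^2 = of_nat N"
  by (metis of_real_of_nat_eq of_real_power real_sqrt_pow2 of_nat_0_le_iff)

lemma T_prod:
  fixes R :: "real^'n^'n"
  assumes "invertible R"
  shows "T_entry R B \<alpha> l b * cnj (T_entry R B \<alpha> l b')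
     = complex_of_real ((cmod (\<alpha> l))\<^sup>2) * e_fun l (matrix_inv R *v (b - b')) / of_nat (card B)"
proof -
  have "T_entry R B \<alpha> l b * cnj (T_entry R B \<alpha> l b')
     = (\<alpha> l * cnj (\<alpha> l)) * (e_fun l (matrix_inv R *v b) * cnj (e_fun l (matrix_inv R *v b')))
        / (complex_of_real (sqrt (real (card B))))^2"
    unfolding T_entry_def e_S[OF assms] by (simp add: power2_eq_square field_simps)
  also have "\<dots> = complex_of_real ((cmod (\<alpha> l))\<^sup>2) * e_fun l (matrix_inv R *v (b - b')) / of_nat (card B)"
    unfolding sqrt_sq_c complex_norm_square e_prod matrix_vector_mult_diff_distrib ..
  finally show ?thesis .
qed


lemma sum_sq: "(\<Sum>b\<in>B. f b) * cnj (\<Sum>b\<in>B. f b) = (\<Sum>b\<in>B. \<Sum>b'\<in>B. f b * cnj (f b'))"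
  by (simp add: cnj_sum sum_product)

lemma e_shift:
  fixes Ri :: "real^'n^'n"
  shows "e_fun (Ri *v (b - b')) (t - l) = e_fun (Ri *v (b - b')) t * e_fun l (Ri *v (b' - b))"
proof -
  have "e_fun (Ri *v (b - b')) (t - l) = e_fun (Ri *v (b - b')) t * e_fun (Ri *v (b - b')) (- l)"
    using e_add2[of _ t "-l"] by simp
  moreover have "e_fun (Ri *v (b - b')) (- l) = e_fun l (Ri *v (b' - b))"
    unfolding e_fun_def by (simp add: inner_commute matrix_vector_mult_diff_distrib inner_diff_right)
  ultimately show ?thesis by simp
qed

lemma LHS_eq:
  fixes R :: "real^'n^'n" and B L :: "(real^'n) set"
  assumes "invertible R" "finite B" "finite L"
  shows "complex_of_real (\<Sum>l\<in>L. (cmod (\<alpha> l))\<^sup>2 * (cmod (m_B B (matrix_inv (transpose R) *v (t - l))))\<^sup>2)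
    = (\<Sum>b\<in>B. \<Sum>b'\<in>B. (\<Sum>l\<in>L. complex_of_real ((cmod (\<alpha> l))\<^sup>2) * e_fun l (matrix_inv R *v (b' - b)))
           * e_fun (matrix_inv R *v (b - b')) t) / (of_nat (card B))^2"
proof -
  let ?Ri = "matrix_inv R"
  let ?N = "of_nat (card B) :: complex"
  have m: "m_B B (matrix_inv (transpose R) *v (t - l)) = (\<Sum>b\<in>B. e_fun (?Ri *v b) (t - l)) / ?N" for l
    unfolding m_B_def e_S2[OF assms(1)] by simp
  have mm: "complex_of_real ((cmod (\<alpha> l))\<^sup>2 * (cmod (m_B B (matrix_inv (transpose R) *v (t - l))))\<^sup>2)
     = (\<Sum>b\<in>B. \<Sum>b'\<in>B. complex_of_real ((cmod (\<alpha> l))\<^sup>2) * e_fun l (?Ri *v (b' - b))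
           * e_fun (?Ri *v (b - b')) t) / ?N^2" for l
  proof -
    have "complex_of_real ((cmod (\<alpha> l))\<^sup>2 * (cmod (m_B B (matrix_inv (transpose R) *v (t - l))))\<^sup>2)
      = complex_of_real ((cmod (\<alpha> l))\<^sup>2) * ((\<Sum>b\<in>B. e_fun (?Ri *v b) (t - l)) * cnj (\<Sum>b\<in>B. e_fun (?Ri *v b) (t - l))) / ?N^2"
      unfolding of_real_mult complex_norm_square m by (simp add: power2_eq_square)
    also have "\<dots> = complex_of_real ((cmod (\<alpha> l))\<^sup>2) * (\<Sum>b\<in>B. \<Sum>b'\<in>B. e_fun (?Ri *v (b - b')) (t - l)) / ?N^2"
      unfolding sum_sq e_prod1 matrix_vector_mult_diff_distrib ..
    also have "\<dots> = (\<Sum>b\<in>B. \<Sum>b'\<in>B. complex_of_real ((cmod (\<alpha> l))\<^sup>2) * e_fun l (?Ri *v (b' - b))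
           * e_fun (?Ri *v (b - b')) t) / ?N^2"
      unfolding e_shift by (simp add: sum_distrib_left mult_ac)
    finally show ?thesis .
  qed
  have "complex_of_real (\<Sum>l\<in>L. (cmod (\<alpha> l))\<^sup>2 * (cmod (m_B B (matrix_inv (transpose R) *v (t - l))))\<^sup>2)
     = (\<Sum>l\<in>L. \<Sum>b\<in>B. \<Sum>b'\<in>B. complex_of_real ((cmod (\<alpha> l))\<^sup>2) * e_fun l (?Ri *v (b' - b))
           * e_fun (?Ri *v (b - b')) t) / ?N^2"
    unfolding of_real_sum mm sum_divide_distrib ..
  also have "\<dots> = (\<Sum>b\<in>B. \<Sum>b'\<in>B. \<Sum>l\<in>L. complex_of_real ((cmod (\<alpha> l))\<^sup>2) * e_fun l (?Ri *v (b' - b))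
           * e_fun (?Ri *v (b - b')) t) / ?N^2"
    by (subst sum.swap, subst (2) sum.swap) (rule refl)
  also have "\<dots> = (\<Sum>b\<in>B. \<Sum>b'\<in>B. (\<Sum>l\<in>L. complex_of_real ((cmod (\<alpha> l))\<^sup>2) * e_fun l (?Ri *v (b' - b)))
           * e_fun (?Ri *v (b - b')) t) / ?N^2"
    by (simp add: sum_distrib_right)
  finally show ?thesis .
qed


lemma PF_eq:
  fixes R :: "real^'n^'n" and B L :: "(real^'n) set"
  assumes "finite B" "finite L"
  shows "complex_of_real (\<Sum>l\<in>L. (cmod (l2_delta_inner R B v (\<lambda>x. \<alpha> l * e_fun l x)))\<^sup>2)
    = (\<Sum>b\<in>B. \<Sum>b'\<in>B. v (matrix_inv R *v b) * cnj (v (matrix_inv R *v b'))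
         * (\<Sum>l\<in>L. complex_of_real ((cmod (\<alpha> l))\<^sup>2) * e_fun l (matrix_inv R *v (b' - b)))) / (of_nat (card B))^2"
proof -
  let ?Ri = "matrix_inv R"
  let ?N = "of_nat (card B) :: complex"
  let ?w = "\<lambda>b. v (?Ri *v b)"
  have ip: "l2_delta_inner R B v (\<lambda>x. \<alpha> l * e_fun l x) = cnj (\<alpha> l) * (\<Sum>b\<in>B. ?w b * cnj (e_fun l (?Ri *v b))) / ?N" for l
    unfolding l2_delta_inner_def by (simp add: sum_distrib_left sum_divide_distrib mult_ac)
  have per: "complex_of_real ((cmod (l2_delta_inner R B v (\<lambda>x. \<alpha> l * e_fun l x)))\<^sup>2)
     = (\<Sum>b\<in>B. \<Sum>b'\<in>B. ?w b * cnj (?w b') * (complex_of_real ((cmod (\<alpha> l))\<^sup>2) * e_fun l (?Ri *v (b' - b)))) / ?N^2" for l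
  proof -
    have "complex_of_real ((cmod (l2_delta_inner R B v (\<lambda>x. \<alpha> l * e_fun l x)))\<^sup>2)
       = (\<alpha> l * cnj (\<alpha> l)) * ((\<Sum>b\<in>B. ?w b * cnj (e_fun l (?Ri *v b))) * cnj (\<Sum>b\<in>B. ?w b * cnj (e_fun l (?Ri *v b)))) / ?N^2"
      unfolding complex_norm_square ip by (simp add: power2_eq_square mult_ac)
    also have "\<dots> = (\<alpha> l * cnj (\<alpha> l)) * (\<Sum>b\<in>B. \<Sum>b'\<in>B. ?w b * cnj (?w b') * (e_fun l (?Ri *v b') * cnj (e_fun l (?Ri *v b)))) / ?N^2"
      unfolding sum_sq by (simp add: mult_ac)
    also have "\<dots> = (\<Sum>b\<in>B. \<Sum>b'\<in>B. ?w b * cnj (?w b') * (complex_of_real ((cmod (\<alpha> l))\<^sup>2) * e_fun l (?Ri *v (b' - b)))) / ?N^2"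
      unfolding e_prod complex_norm_square matrix_vector_mult_diff_distrib by (simp add: sum_distrib_left mult_ac)
    finally show ?thesis .
  qed
  have "complex_of_real (\<Sum>l\<in>L. (cmod (l2_delta_inner R B v (\<lambda>x. \<alpha> l * e_fun l x)))\<^sup>2)
     = (\<Sum>l\<in>L. \<Sum>b\<in>B. \<Sum>b'\<in>B. ?w b * cnj (?w b') * (complex_of_real ((cmod (\<alpha> l))\<^sup>2) * e_fun l (?Ri *v (b' - b)))) / ?N^2"
    unfolding of_real_sum per sum_divide_distrib ..
  also have "\<dots> = (\<Sum>b\<in>B. \<Sum>b'\<in>B. \<Sum>l\<in>L. ?w b * cnj (?w b') * (complex_of_real ((cmod (\<alpha> l))\<^sup>2) * e_fun l (?Ri *v (b' - b)))) / ?N^2"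
    by (subst sum.swap, subst (2) sum.swap) (rule refl)
  also have "\<dots> = (\<Sum>b\<in>B. \<Sum>b'\<in>B. ?w b * cnj (?w b') * (\<Sum>l\<in>L. complex_of_real ((cmod (\<alpha> l))\<^sup>2) * e_fun l (?Ri *v (b' - b)))) / ?N^2"
    by (simp add: sum_distrib_left)
  finally show ?thesis .
qed

lemma ipvv:
  fixes R :: "real^'n^'n" and B :: "(real^'n) set"
  assumes "finite B" "card B > 0"
  shows "complex_of_real (Re (l2_delta_inner R B v v)) = l2_delta_inner R B v v"
    and "l2_delta_inner R B v v = (\<Sum>b\<in>B. \<Sum>b'\<in>B. v (matrix_inv R *v b) * cnj (v (matrix_inv R *v b'))
         * (if b = b' then of_nat (card B) else 0)) / (of_nat (card B))^2"
proof -
  have "l2_delta_inner R B v v = complex_of_real ((1 / real (card B)) * (\<Sum>b\<in>B. (cmod (v (matrix_inv R *v b)))\<^sup>2))"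
    unfolding l2_delta_inner_def of_real_mult of_real_sum complex_norm_square by simp
  then show "complex_of_real (Re (l2_delta_inner R B v v)) = l2_delta_inner R B v v" by simp
  show "l2_delta_inner R B v v = (\<Sum>b\<in>B. \<Sum>b'\<in>B. v (matrix_inv R *v b) * cnj (v (matrix_inv R *v b'))
         * (if b = b' then of_nat (card B) else 0)) / (of_nat (card B))^2"
    unfolding l2_delta_inner_def using assms \<open>card B > 0\<close> card_gt_0_iff[of B]
    by (simp add: ifz2 sum.delta sum_divide_distrib power2_eq_square sum_distrib_left cong: if_cong)
qed


theorem proposition3p5:
  fixes R :: "real^'n^'n" and B L :: "(real^'n) set" and \<alpha> :: "real^'n \<Rightarrow> complex"
  assumes "int_matrix R" and "expansive R"
    and "finite B" and "0 \<in> B" and "\<forall>b\<in>B. int_vec b"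
    and "finite L" and "0 \<in> L" and "\<forall>l\<in>L. int_vec l"
  shows "(orthonormal_columns (T_entry R B \<alpha>) L B
            \<longleftrightarrow> (\<forall>t::real^'n. (\<Sum>l\<in>L. (cmod (\<alpha> l))\<^sup>2
                   * (cmod (m_B B (matrix_inv (transpose R) *v (t - l))))\<^sup>2) = 1))
       \<and> ((\<forall>t::real^'n. (\<Sum>l\<in>L. (cmod (\<alpha> l))\<^sup>2
                   * (cmod (m_B B (matrix_inv (transpose R) *v (t - l))))\<^sup>2) = 1)
            \<longleftrightarrow> parseval_frame (l2_delta_inner R B) UNIV (\<lambda>l x. \<alpha> l * e_fun l x) L)"
proof -
  have inv: "invertible R" by (rule expansive_invertible[OF assms(2)])
  define Ri where "Ri = matrix_inv R"
  define N where "N = card B"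
  have N0: "N > 0" using assms(3,4) unfolding N_def by (auto simp: card_gt_0_iff)
  define G where "G u = (\<Sum>l\<in>L. complex_of_real ((cmod (\<alpha> l))\<^sup>2) * e_fun l (Ri *v u))" for u
  define OC where "OC \<longleftrightarrow> (\<forall>b\<in>B. \<forall>b'\<in>B. G (b - b') = (if b = b' then of_nat N else 0))"
  define LHS where "LHS = (\<lambda>t. (\<Sum>l\<in>L. (cmod (\<alpha> l))\<^sup>2
                   * (cmod (m_B B (matrix_inv (transpose R) *v (t - l))))\<^sup>2))"
  define D where "D t = (\<Sum>b\<in>B. \<Sum>b'\<in>B. G (b' - b) * e_fun (Ri *v (b - b')) t)" for t
  have ortho: "orthonormal_columns (T_entry R B \<alpha>) L B \<longleftrightarrow> OC"
  proof -
    have s: "(\<Sum>l\<in>L. T_entry R B \<alpha> l b * cnj (T_entry R B \<alpha> l b')) = G (b - b') / of_nat N" for b b'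
      unfolding T_prod[OF inv] G_def N_def Ri_def sum_divide_distrib ..
    have "(G (b - b') / of_nat N = (if b = b' then 1 else 0)) \<longleftrightarrow> (G (b - b') = (if b = b' then of_nat N else 0))" for b b'
      using N0 by (auto simp: field_simps)
    then show ?thesis unfolding orthonormal_columns_def OC_def s by simp
  qed
  have lhs: "complex_of_real (LHS t) = D t / (of_nat N)^2" for t
    unfolding LHS_def D_def G_def Ri_def N_def by (rule LHS_eq[OF inv assms(3) assms(6)])
  have ii_iff: "LHS t = 1 \<longleftrightarrow> D t = (of_nat N)^2" for t
  proof -
    have "LHS t = 1 \<longleftrightarrow> complex_of_real (LHS t) = 1" by (metis of_real_1 of_real_eq_iff)
    also have "\<dots> \<longleftrightarrow> D t = (of_nat N)^2" unfolding lhs using N0 by (simp add: field_simps)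
    finally show ?thesis .
  qed
  have i_ii: "OC \<longleftrightarrow> (\<forall>t. LHS t = 1)"
  proof
    assume oc: OC
    show "\<forall>t. LHS t = 1"
    proof
      fix t
      have "D t = (\<Sum>b\<in>B. \<Sum>b'\<in>B. (if b' = b then of_nat N else 0) * e_fun (Ri *v (b - b')) t)"
        unfolding D_def using oc unfolding OC_def by (intro sum.cong refl) auto
      also have "\<dots> = (of_nat N)^2"
        using assms(3) by (simp add: ifz1 sum.delta N_def power2_eq_square)
      finally show "LHS t = 1" using ii_iff by simp
    qed
  next
    assume h: "\<forall>t. LHS t = 1"
    let ?P = "B \<times> B"
    let ?phi = "\<lambda>p::(real^'n) \<times> (real^'n). fst p - snd p"
    define Ds where "Ds = ?phi ` ?P"
    define K where "K u = card {p \<in> ?P. ?phi p = u}" for u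
    have finP: "finite ?P" using assms(3) by simp
    have finDs: "finite Ds" unfolding Ds_def using finP by simp
    have D0: "0 \<in> Ds" unfolding Ds_def using assms(4) by (auto intro!: image_eqI[of _ _ "(0,0)"])
    have Dg: "D t = (\<Sum>u\<in>Ds. of_nat (K u) * (G (- u) * e_fun (Ri *v u) t))" for t
    proof -
      have "D t = (\<Sum>p\<in>?P. G (- ?phi p) * e_fun (Ri *v ?phi p) t)"
        unfolding D_def sum.cartesian_product by (intro sum.cong refl) auto
      also have "\<dots> = (\<Sum>u\<in>Ds. \<Sum>p\<in>{p \<in> ?P. ?phi p = u}. G (- ?phi p) * e_fun (Ri *v ?phi p) t)"
        unfolding Ds_def by (rule sum.image_gen[OF finP])
      also have "\<dots> = (\<Sum>u\<in>Ds. of_nat (K u) * (G (- u) * e_fun (Ri *v u) t))"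
        unfolding K_def by (intro sum.cong refl) simp
      finally show ?thesis .
    qed
    define A where "A u = of_nat (K u) * G (- u) - (if u = 0 then (of_nat N)^2 else 0)" for u
    have Z: "(\<Sum>u\<in>Ds. A u * e_fun (Ri *v u) t) = 0" for t
    proof -
      have "(\<Sum>u\<in>Ds. A u * e_fun (Ri *v u) t) = D t - (\<Sum>u\<in>Ds. (if u = 0 then (of_nat N)^2 else 0) * e_fun (Ri *v u) t)"
        unfolding Dg A_def sum_subtractf[symmetric] by (intro sum.cong refl) (simp add: algebra_simps)
      also have "\<dots> = 0" using h ii_iff finDs D0 by (simp add: ifz1 sum.delta)
      finally show ?thesis .
    qed
    have RRi: "R *v (Ri *v u) = u" for u
      unfolding Ri_def by (simp add: matrix_vector_mul_assoc inv_facts[OF inv])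
    have injD: "inj_on ((*v) Ri) Ds" by (metis RRi inj_on_inverseI)
    have Z2: "\<forall>t. (\<Sum>w\<in>(*v) Ri ` Ds. A (R *v w) * e_fun w t) = 0"
    proof
      fix t
      have "(\<Sum>w\<in>(*v) Ri ` Ds. A (R *v w) * e_fun w t) = (\<Sum>u\<in>Ds. A u * e_fun (Ri *v u) t)"
        by (simp add: sum.reindex[OF injD] RRi)
      then show "(\<Sum>w\<in>(*v) Ri ` Ds. A (R *v w) * e_fun w t) = 0" using Z by simp
    qed
    have A0: "\<forall>u\<in>Ds. A u = 0"
      using exp_indep[OF finite_imageI[OF finDs] Z2] RRi by auto
    show OC unfolding OC_def
    proof (intro ballI)
      fix b b' assume b: "b \<in> B" and b': "b' \<in> B"
      have uD: "b' - b \<in> Ds" unfolding Ds_def using b b' by (auto intro!: image_eqI[of _ _ "(b', b)"])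
      have Au: "of_nat (K (b' - b)) * G (b - b') = (if b' - b = 0 then (of_nat N)^2 else 0)"
        using A0 uD unfolding A_def by auto
      show "G (b - b') = (if b = b' then of_nat N else 0)"
      proof (cases "b = b'")
        case True
        have "{p \<in> ?P. ?phi p = 0} = (\<lambda>x. (x, x)) ` B" by auto
        then have "K 0 = N" unfolding K_def N_def by (simp add: card_image inj_on_def)
        then show ?thesis using Au True N0 by (simp add: power2_eq_square)
      next
        case False
        have "(b', b) \<in> {p \<in> ?P. ?phi p = b' - b}" using b b' by simp
        then have "K (b' - b) \<noteq> 0" unfolding K_def using finP by (auto simp: card_eq_0_iff)
        then show ?thesis using Au False by simp
      qed
    qed
  qed
  have iii: "parseval_frame (l2_delta_inner R B) UNIV (\<lambda>l x. \<alpha> l * e_fun l x) L \<longleftrightarrow> OC"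
  proof -
    define H where "H b b' = G (b' - b) - (if b = b' then of_nat N else 0)" for b b'
    have step: "((\<lambda>l. (cmod (l2_delta_inner R B v (\<lambda>x. \<alpha> l * e_fun l x)))\<^sup>2) has_sum Re (l2_delta_inner R B v v)) L
       \<longleftrightarrow> (\<Sum>b\<in>B. \<Sum>b'\<in>B. v (Ri *v b) * cnj (v (Ri *v b')) * H b b') = 0" for v
    proof -
      let ?X = "(\<Sum>b\<in>B. \<Sum>b'\<in>B. v (Ri *v b) * cnj (v (Ri *v b')) * G (b' - b))"
      let ?Y = "(\<Sum>b\<in>B. \<Sum>b'\<in>B. v (Ri *v b) * cnj (v (Ri *v b')) * (if b = b' then of_nat N else 0))"
      have "((\<lambda>l. (cmod (l2_delta_inner R B v (\<lambda>x. \<alpha> l * e_fun l x)))\<^sup>2) has_sum Re (l2_delta_inner R B v v)) L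
         \<longleftrightarrow> Re (l2_delta_inner R B v v) = (\<Sum>l\<in>L. (cmod (l2_delta_inner R B v (\<lambda>x. \<alpha> l * e_fun l x)))\<^sup>2)"
        by (rule has_sum_finite_iff[OF assms(6)])
      also have "\<dots> \<longleftrightarrow> complex_of_real (Re (l2_delta_inner R B v v))
          = complex_of_real (\<Sum>l\<in>L. (cmod (l2_delta_inner R B v (\<lambda>x. \<alpha> l * e_fun l x)))\<^sup>2)"
        by (rule of_real_eq_iff[symmetric])
      also have "\<dots> \<longleftrightarrow> ?Y / (of_nat N)^2 = ?X / (of_nat N)^2"
        unfolding ipvv(1)[OF assms(3) N0[unfolded N_def]] PF_eq[OF assms(3) assms(6)]
        unfolding ipvv(2)[OF assms(3) N0[unfolded N_def]] G_def Ri_def N_def ..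
      also have "\<dots> \<longleftrightarrow> ?X - ?Y = 0"
      proof -
        have c: "(of_nat N :: complex)^2 \<noteq> 0" using N0 by simp
        have 1: "(?Y / (of_nat N)^2 = ?X / (of_nat N)^2) \<longleftrightarrow> ?Y = ?X"
          using c by (simp only: divide_cancel_right simp_thms)
        have 2: "(?X - ?Y = 0) \<longleftrightarrow> ?X = ?Y" by (rule right_minus_eq)
        show ?thesis unfolding 1 2 by (rule eq_commute)
      qed
      also have "\<dots> \<longleftrightarrow> (\<Sum>b\<in>B. \<Sum>b'\<in>B. v (Ri *v b) * cnj (v (Ri *v b')) * H b b') = 0"
      proof -
        have "?X - ?Y = (\<Sum>b\<in>B. \<Sum>b'\<in>B. v (Ri *v b) * cnj (v (Ri *v b')) * H b b')"
          unfolding H_def sum_subtractf[symmetric] by (intro sum.cong refl) (simp add: right_diff_distrib)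
        then show ?thesis by (rule arg_cong)
      qed
      finally show ?thesis .
    qed
    have RRi: "R *v (Ri *v u) = u" for u
      unfolding Ri_def by (simp add: matrix_vector_mul_assoc inv_facts[OF inv])
    have "parseval_frame (l2_delta_inner R B) UNIV (\<lambda>l x. \<alpha> l * e_fun l x) L
        \<longleftrightarrow> (\<forall>w. (\<Sum>b\<in>B. \<Sum>b'\<in>B. w b * cnj (w b') * H b b') = 0)"
    proof
      assume p: "parseval_frame (l2_delta_inner R B) UNIV (\<lambda>l x. \<alpha> l * e_fun l x) L"
      show "\<forall>w. (\<Sum>b\<in>B. \<Sum>b'\<in>B. w b * cnj (w b') * H b b') = 0"
      proof
        fix w :: "real^'n \<Rightarrow> complex"
        have "(\<Sum>b\<in>B. \<Sum>b'\<in>B. (\<lambda>x. w (R *v x)) (Ri *v b) * cnj ((\<lambda>x. w (R *v x)) (Ri *v b')) * H b b') = 0"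
        proof -
          have "((\<lambda>l. (cmod (l2_delta_inner R B (\<lambda>x. w (R *v x)) (\<lambda>x. \<alpha> l * e_fun l x)))\<^sup>2) has_sum Re (l2_delta_inner R B (\<lambda>x. w (R *v x)) (\<lambda>x. w (R *v x)))) L"
            using p unfolding parseval_frame_def by (rule bspec) simp
          then show ?thesis by (subst step[symmetric])
        qed
        then show "(\<Sum>b\<in>B. \<Sum>b'\<in>B. w b * cnj (w b') * H b b') = 0" by (simp add: RRi)
      qed
    next
      assume a: "\<forall>w. (\<Sum>b\<in>B. \<Sum>b'\<in>B. w b * cnj (w b') * H b b') = 0"
      show "parseval_frame (l2_delta_inner R B) UNIV (\<lambda>l x. \<alpha> l * e_fun l x) L"
        unfolding parseval_frame_def
      proof
        fix v :: "real^'n \<Rightarrow> complex"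
        have "(\<Sum>b\<in>B. \<Sum>b'\<in>B. v (Ri *v b) * cnj (v (Ri *v b')) * H b b') = 0"
          using a by (rule allE)
        then show "((\<lambda>l. (cmod (l2_delta_inner R B v (\<lambda>x. \<alpha> l * e_fun l x)))\<^sup>2) has_sum Re (l2_delta_inner R B v v)) L"
          by (subst step)
      qed
    qed
    also have "\<dots> \<longleftrightarrow> (\<forall>b\<in>B. \<forall>b'\<in>B. H b b' = 0)"
    proof
      assume a: "\<forall>w. (\<Sum>b\<in>B. \<Sum>b'\<in>B. w b * cnj (w b') * H b b') = 0"
      have "\<And>w. (\<Sum>b\<in>B. \<Sum>b'\<in>B. w b * cnj (w b') * H b b') = 0" using a by blast
      then show "\<forall>b\<in>B. \<forall>b'\<in>B. H b b' = 0" by (rule quad[OF assms(3)])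
    next
      assume a: "\<forall>b\<in>B. \<forall>b'\<in>B. H b b' = 0"
      show "\<forall>w. (\<Sum>b\<in>B. \<Sum>b'\<in>B. w b * cnj (w b') * H b b') = 0"
      proof
        fix w :: "real^'n \<Rightarrow> complex"
        have "(\<Sum>b\<in>B. \<Sum>b'\<in>B. w b * cnj (w b') * H b b') = (\<Sum>b\<in>B. \<Sum>b'\<in>B. (0::complex))"
          by (intro sum.cong refl) (simp add: a)
        then show "(\<Sum>b\<in>B. \<Sum>b'\<in>B. w b * cnj (w b') * H b b') = 0" by simp
      qed
    qed
    also have "\<dots> \<longleftrightarrow> OC"
    proof
      assume a: "\<forall>b\<in>B. \<forall>b'\<in>B. H b b' = 0"
      show OC unfolding OC_def
      proof (intro ballI)
        fix b b' assume "b \<in> B" "b' \<in> B"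
        then have "H b' b = 0" using a by blast
        then show "G (b - b') = (if b = b' then of_nat N else 0)"
          unfolding H_def by (cases "b = b'") auto
      qed
    next
      assume a: OC
      show "\<forall>b\<in>B. \<forall>b'\<in>B. H b b' = 0"
      proof (intro ballI)
        fix b b' assume "b \<in> B" "b' \<in> B"
        then have "G (b' - b) = (if b' = b then of_nat N else 0)" using a unfolding OC_def by blast
        then show "H b b' = 0" unfolding H_def by (cases "b = b'") auto
      qed
    qed
    finally show ?thesis .
  qed
  show ?thesis using ortho i_ii iii unfolding LHS_def by blast
qed

end
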